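(* Let $k\ge2$ and $\alpha_2,\alpha_3$ be positive integers with $\alpha_2,\alpha_3$ coprime. The Koras-Russell threefold of the first kind $X=\{x+x^ky+z^{\alpha_2}+t^{\alpha_3}=0\}\subset\mathbb{A}^4=\mathrm{Spec}(\mathbb{C}[x,y,z,t])$, endowed with the hyperbolic $\mathbb{G}_m$-action induced by $\lambda\cdot(x,y,z,t)=(\lambda^{\alpha_2\alpha_3}x,\lambda^{-(k-1)\alpha_2\alpha_3}y,\lambda^{\alpha_3}z,\lambda^{\alpha_2}t)$, is $\mathbb{G}_m$-linearly uniformly rational.
   Context: A $\mathbb{G}_m$-variety $X$ is $\mathbb{G}_m$-linearly rational at $x\in X$ if there exist a $\mathbb{G}_m$-stable open neighborhood $U_x$ of $x$, a linear $\mathbb{G}_m$-representation $V\simeq\mathbb{A}^n$ and a $\mathbb{G}_m$-stable open subset $U'\subset V$ with $U_x$ equivariantly isomorphic to $U'$; $X$ is $\mathbb{G}_m$-linearly uniformly rational if this holds at every point of $X$. *)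

theory Defs
  imports Complex_Main "HOL-Computational_Algebra.Polynomial"
begin

text \<open>Affine n-space over the complex numbers: its (closed) points are the complex lists of length n.\<close>

definition affine_space :: "nat \<Rightarrow> complex list set" where
  "affine_space n = {v. length v = n}"

inductive_set polyfun :: "nat \<Rightarrow> (complex list \<Rightarrow> complex) set" for n :: nat where
  pf_const: "(\<lambda>v. c) \<in> polyfun n"
| pf_coord: "i < n \<Longrightarrow> (\<lambda>v. v ! i) \<in> polyfun n"
| pf_add: "f \<in> polyfun n \<Longrightarrow> g \<in> polyfun n \<Longrightarrow> (\<lambda>v. f v + g v) \<in> polyfun n"
| pf_mult: "f \<in> polyfun n \<Longrightarrow> g \<in> polyfun n \<Longrightarrow> (\<lambda>v. f v * g v) \<in> polyfun n"

definition zariski_closed :: "nat \<Rightarrow> complex list set \<Rightarrow> bool" where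
  "zariski_closed n C \<longleftrightarrow>
     (\<exists>F. F \<subseteq> polyfun n \<and> C = {v \<in> affine_space n. \<forall>f\<in>F. f v = 0})"

definition zariski_open_in :: "nat \<Rightarrow> complex list set \<Rightarrow> complex list set \<Rightarrow> bool" where
  "zariski_open_in n Y U \<longleftrightarrow> U \<subseteq> Y \<and> (\<exists>C. zariski_closed n C \<and> U = Y - C)"

definition regular_fun :: "nat \<Rightarrow> complex list set \<Rightarrow> (complex list \<Rightarrow> complex) \<Rightarrow> bool" where
  "regular_fun n W g \<longleftrightarrow>
     (\<forall>p\<in>W. \<exists>U. zariski_open_in n W U \<and> p \<in> U \<and>
        (\<exists>f h. f \<in> polyfun n \<and> h \<in> polyfun n \<and>
           (\<forall>q\<in>U. h q \<noteq> 0 \<and> g q = f q / h q)))"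

definition regular_map ::
  "nat \<Rightarrow> complex list set \<Rightarrow> nat \<Rightarrow> (complex list \<Rightarrow> complex list) \<Rightarrow> bool" where
  "regular_map n W m \<phi> \<longleftrightarrow>
     (\<forall>p\<in>W. length (\<phi> p) = m) \<and> (\<forall>i<m. regular_fun n W (\<lambda>q. \<phi> q ! i))"

definition variety_iso ::
  "nat \<Rightarrow> complex list set \<Rightarrow> nat \<Rightarrow> complex list set \<Rightarrow> (complex list \<Rightarrow> complex list) \<Rightarrow> bool" where
  "variety_iso n W m W' \<phi> \<longleftrightarrow>
     regular_map n W m \<phi> \<and> (\<forall>p\<in>W. \<phi> p \<in> W') \<and>
     (\<exists>\<psi>. regular_map m W' n \<psi> \<and> (\<forall>q\<in>W'. \<psi> q \<in> W) \<and>
          (\<forall>p\<in>W. \<psi> (\<phi> p) = p) \<and> (\<forall>q\<in>W'. \<phi> (\<psi> q) = q))"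

definition gm_stable :: "(complex \<Rightarrow> complex list \<Rightarrow> complex list) \<Rightarrow> complex list set \<Rightarrow> bool" where
  "gm_stable act U \<longleftrightarrow> (\<forall>l. l \<noteq> 0 \<longrightarrow> (\<forall>p\<in>U. act l p \<in> U))"

definition gm_equivariant ::
  "(complex \<Rightarrow> complex list \<Rightarrow> complex list) \<Rightarrow> (complex \<Rightarrow> complex list \<Rightarrow> complex list)
     \<Rightarrow> complex list set \<Rightarrow> (complex list \<Rightarrow> complex list) \<Rightarrow> bool" where
  "gm_equivariant act act' U \<phi> \<longleftrightarrow> (\<forall>l. l \<noteq> 0 \<longrightarrow> (\<forall>p\<in>U. \<phi> (act l p) = act' l (\<phi> p)))"

text \<open>A linear (algebraic) representation of G_m on C^n: a homomorphism l \<mapsto> rho l from C^*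
  to n x n matrices whose entries are regular functions on G_m (Laurent polynomials).\<close>

definition gm_linear_rep :: "nat \<Rightarrow> (complex \<Rightarrow> nat \<Rightarrow> nat \<Rightarrow> complex) \<Rightarrow> bool" where
  "gm_linear_rep n \<rho> \<longleftrightarrow>
     (\<forall>i<n. \<forall>j<n. \<exists>(p::complex poly) (N::nat). \<forall>l. l \<noteq> 0 \<longrightarrow> \<rho> l i j = poly p l / l ^ N) \<and>
     (\<forall>i<n. \<forall>j<n. \<rho> 1 i j = (if i = j then 1 else 0)) \<and>
     (\<forall>l m. l \<noteq> 0 \<longrightarrow> m \<noteq> 0 \<longrightarrow>
        (\<forall>i<n. \<forall>j<n. \<rho> (l * m) i j = (\<Sum>r<n. \<rho> l i r * \<rho> m r j)))"

definition rep_act :: "nat \<Rightarrow> (complex \<Rightarrow> nat \<Rightarrow> nat \<Rightarrow> complex) \<Rightarrow> complex \<Rightarrow> complex list \<Rightarrow> complex list" where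
  "rep_act n \<rho> l v = map (\<lambda>i. \<Sum>j<n. \<rho> l i j * v ! j) [0..<n]"

definition gm_linearly_rational_at ::
  "nat \<Rightarrow> complex list set \<Rightarrow> (complex \<Rightarrow> complex list \<Rightarrow> complex list) \<Rightarrow> complex list \<Rightarrow> bool" where
  "gm_linearly_rational_at n X act x \<longleftrightarrow>
     (\<exists>U. zariski_open_in n X U \<and> x \<in> U \<and> gm_stable act U \<and>
        (\<exists>m \<rho> U' \<phi>. gm_linear_rep m \<rho> \<and> zariski_open_in m (affine_space m) U' \<and>
            gm_stable (rep_act m \<rho>) U' \<and> variety_iso n U m U' \<phi> \<and>
            gm_equivariant act (rep_act m \<rho>) U \<phi>))"

definition gm_linearly_uniformly_rational ::
  "nat \<Rightarrow> complex list set \<Rightarrow> (complex \<Rightarrow> complex list \<Rightarrow> complex list) \<Rightarrow> bool" where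
  "gm_linearly_uniformly_rational n X act \<longleftrightarrow> (\<forall>x\<in>X. gm_linearly_rational_at n X act x)"

text \<open>The Koras-Russell threefold of the first kind and its hyperbolic G_m-action;
  coordinates (x,y,z,t) = (v!0, v!1, v!2, v!3).\<close>

definition KR_threefold :: "nat \<Rightarrow> nat \<Rightarrow> nat \<Rightarrow> complex list set" where
  "KR_threefold k a2 a3 = {v \<in> affine_space 4.
     v ! 0 + v ! 0 ^ k * v ! 1 + v ! 2 ^ a2 + v ! 3 ^ a3 = 0}"

definition KR_action :: "nat \<Rightarrow> nat \<Rightarrow> nat \<Rightarrow> complex \<Rightarrow> complex list \<Rightarrow> complex list" where
  "KR_action k a2 a3 l v =
     [l ^ (a2 * a3) * v ! 0,
      l powi (- (int (k - 1) * int a2 * int a3)) * v ! 1,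
      l ^ a3 * v ! 2,
      l ^ a2 * v ! 3]"

end

theory Submission
  imports Defs
begin

lemma pf_pow: "f \<in> polyfun n \<Longrightarrow> (\<lambda>v. f v ^ j) \<in> polyfun n"
  by (induction j) (auto intro: polyfun.intros)

lemma pf_neg: "f \<in> polyfun n \<Longrightarrow> (\<lambda>v. - f v) \<in> polyfun n"
  using polyfun.pf_mult[OF polyfun.pf_const[of "-1"], of f] by simp

lemma pf_sub: "f \<in> polyfun n \<Longrightarrow> g \<in> polyfun n \<Longrightarrow> (\<lambda>v. f v - g v) \<in> polyfun n"
  using polyfun.pf_add[of f n "\<lambda>v. - g v"] pf_neg[of g] by simp

lemmas pf_intros = polyfun.pf_const polyfun.pf_coord polyfun.pf_add polyfun.pf_mult pf_pow pf_neg pf_sub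

lemma zc_zero: "f \<in> polyfun n \<Longrightarrow> zariski_closed n {v\<in>affine_space n. f v = 0}"
  unfolding zariski_closed_def by (intro exI[of _ "{f}"]) auto

lemma zo_nonzero: "f \<in> polyfun n \<Longrightarrow> Y \<subseteq> affine_space n \<Longrightarrow>
   zariski_open_in n Y {v\<in>Y. f v \<noteq> 0}"
  unfolding zariski_open_in_def
  by (intro conjI exI[of _ "{v\<in>affine_space n. f v = 0}"] zc_zero) auto

lemma zo_self: "Y \<subseteq> affine_space n \<Longrightarrow> zariski_open_in n Y Y"
  using zo_nonzero[OF polyfun.pf_const[of 1], of Y] by simp

lemma regular_fun_global:
  assumes "f \<in> polyfun n" "h \<in> polyfun n" "\<And>q. q \<in> W \<Longrightarrow> h q \<noteq> 0 \<and> g q = f q / h q"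
    "W \<subseteq> affine_space n"
  shows "regular_fun n W g"
  unfolding regular_fun_def using assms zo_self[OF assms(4)] by blast

lemma regular_fun_poly:
  assumes "f \<in> polyfun n" "W \<subseteq> affine_space n" "\<And>q. q \<in> W \<Longrightarrow> g q = f q"
  shows "regular_fun n W g"
  using regular_fun_global[OF assms(1) polyfun.pf_const[of 1] _ assms(2)] assms(3) by simp

lemma pf_regular: "f \<in> polyfun n \<Longrightarrow> W \<subseteq> affine_space n \<Longrightarrow> regular_fun n W f"
  using regular_fun_poly[of f n W f] by simp

definition diag_rep :: "(nat \<Rightarrow> int) \<Rightarrow> complex \<Rightarrow> nat \<Rightarrow> nat \<Rightarrow> complex" where
  "diag_rep e l i j = (if i = j then l powi e i else 0)"

lemma powi_laurent: "\<exists>(p::complex poly) (N::nat). \<forall>l. l \<noteq> 0 \<longrightarrow> l powi d = poly p l / l ^ N"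
proof (cases "d \<ge> 0")
  case True
  then show ?thesis
    by (intro exI[of _ "monom 1 (nat d)"] exI[of _ 0])
       (auto simp: poly_monom power_int_def)
next
  case False
  then show ?thesis
    by (intro exI[of _ 1] exI[of _ "nat (-d)"])
       (auto simp: power_int_def field_simps)
qed

lemma diag_rep_linear: "gm_linear_rep n (diag_rep e)"
  unfolding gm_linear_rep_def
proof (intro conjI allI impI)
  fix i j assume "i < n" "j < n"
  show "\<exists>(p::complex poly) (N::nat). \<forall>l. l \<noteq> 0 \<longrightarrow> diag_rep e l i j = poly p l / l ^ N"
  proof (cases "i = j")
    case True then show ?thesis using powi_laurent[of "e i"] by (simp add: diag_rep_def)
  next
    case False then show ?thesis by (intro exI[of _ 0] exI[of _ 0]) (simp add: diag_rep_def)
  qed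
next
  fix i j assume "i < n" "j < n"
  show "diag_rep e 1 i j = (if i = j then 1 else 0)" by (simp add: diag_rep_def)
next
  fix l m :: complex and i j assume "l \<noteq> 0" "m \<noteq> 0" "i < n" "j < n"
  have "(\<Sum>r<n. diag_rep e l i r * diag_rep e m r j) = (\<Sum>r<n. if r = i then diag_rep e l i r * diag_rep e m r j else 0)"
    by (rule sum.cong) (auto simp: diag_rep_def)
  also have "\<dots> = diag_rep e l i i * diag_rep e m i j" using \<open>i < n\<close> by simp
  finally show "diag_rep e (l * m) i j = (\<Sum>r<n. diag_rep e l i r * diag_rep e m r j)"
    by (simp add: diag_rep_def power_int_mult_distrib)
qed

lemma rep_act_diag3: "rep_act 3 (diag_rep e) l v = [l powi e 0 * v!0, l powi e 1 * v!1, l powi e 2 * v!2]"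
proof -
  have "(\<Sum>j<3. diag_rep e l i j * v ! j) = l powi e i * v ! i" if "i < 3" for i
  proof -
    have "(\<Sum>j<3. diag_rep e l i j * v ! j) = (\<Sum>j<3. if j = i then l powi e i * v ! i else 0)"
      by (rule sum.cong) (auto simp: diag_rep_def)
    also have "\<dots> = l powi e i * v ! i" using that by simp
    finally show ?thesis .
  qed
  moreover have "[0..<3] = [0,1,2::nat]" by (simp add: upt_rec)
  ultimately show ?thesis unfolding rep_act_def by simp
qed

lemma list4: "length v = 4 \<Longrightarrow> v = [v!0, v!1, v!2, v!3]"
  by (simp add: list_eq_iff_nth_eq less_Suc_eq numeral_eq_Suc)
lemma list3: "length v = 3 \<Longrightarrow> v = [v!0, v!1, v!2]"
  by (simp add: list_eq_iff_nth_eq less_Suc_eq numeral_eq_Suc)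


lemma all_less3: "(\<forall>i<3. P i) \<longleftrightarrow> P 0 \<and> P 1 \<and> P (2::nat)"
  by (auto simp: less_Suc_eq numeral_eq_Suc)
lemma all_less4: "(\<forall>i<4. P i) \<longleftrightarrow> P 0 \<and> P 1 \<and> P 2 \<and> P (3::nat)"
  by (auto simp: less_Suc_eq numeral_eq_Suc)

lemma KR_sub: "KR_threefold k a2 a3 \<subseteq> affine_space 4"
  unfolding KR_threefold_def by auto

lemma cL: assumes "l \<noteq> (0::complex)"
  shows "(l ^ (a2*a3)) ^ m * l powi (- (int m * int a2 * int a3)) = 1"
proof -
  have "l powi (- (int m * int a2 * int a3)) = inverse (l ^ (m*a2*a3))"
    by (metis power_int_minus power_int_of_nat of_nat_mult)
  moreover have "(l ^ (a2*a3)) ^ m = l ^ (m*a2*a3)"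
    by (simp add: power_mult[symmetric] ac_simps)
  ultimately show ?thesis using assms by simp
qed

lemma act_nth: "KR_action k a2 a3 l v ! 0 = l^(a2*a3) * v!0"
  "KR_action k a2 a3 l v ! 1 = l powi (- (int (k - 1) * int a2 * int a3)) * v!1"
  "KR_action k a2 a3 l v ! 2 = l^a3 * v!2"
  "KR_action k a2 a3 l v ! 3 = l^a2 * v!3"
  "length (KR_action k a2 a3 l v) = 4"
  by (simp_all add: KR_action_def)

lemma act_X:
  assumes "k \<ge> 1" "l \<noteq> 0" "v \<in> KR_threefold k a2 a3"
  shows "KR_action k a2 a3 l v \<in> KR_threefold k a2 a3"
proof -
  obtain m where k: "k = Suc m" using assms(1) by (cases k) auto
  define c where "c = l^(a2*a3)"
  define L where "L = l powi (- (int (k - 1) * int a2 * int a3))"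
  have cl: "c^m * L = 1" using cL[OF assms(2), of a2 a3 m] by (simp add: c_def L_def k)
  have z: "(l^a3 * v!2)^a2 = c * v!2^a2" by (simp add: c_def power_mult_distrib power_mult[symmetric] mult.commute)
  have t: "(l^a2 * v!3)^a3 = c * v!3^a3" by (simp add: c_def power_mult_distrib power_mult[symmetric])
  have e: "v!0 + v!0^k * v!1 + v!2^a2 + v!3^a3 = 0" using assms(3) by (simp add: KR_threefold_def)
  have "c * v!0 + (c * v!0)^k * (L * v!1) + c * v!2^a2 + c * v!3^a3
      = c * (v!0 + v!0^k * v!1 + v!2^a2 + v!3^a3) + v!0^k * v!1 * c * (c^m * L - 1)"
    by (simp add: k algebra_simps power_mult_distrib)
  also have "\<dots> = 0" using e cl by simp
  moreover have act: "KR_action k a2 a3 l v = [c*v!0, L*v!1, l^a3*v!2, l^a2*v!3]"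
    by (simp add: KR_action_def c_def L_def)
  ultimately show ?thesis
    by (simp add: KR_threefold_def affine_space_def act z t)
qed


lemma chart1:
  assumes k: "k \<ge> 1" and xX: "x \<in> KR_threefold k a2 a3" and x0: "x!0 \<noteq> 0"
  shows "gm_linearly_rational_at 4 (KR_threefold k a2 a3) (KR_action k a2 a3) x"
proof -
  define X where "X = KR_threefold k a2 a3"
  define U where "U = {v\<in>X. v!0 \<noteq> 0}"
  define U' where "U' = {w\<in>affine_space 3. w!0 \<noteq> 0}"
  define e where "e = (\<lambda>i. [int(a2*a3), int a3, int a2] ! i)"
  define \<phi> where "\<phi> = (\<lambda>v::complex list. [v!0, v!2, v!3])"
  define \<psi> where "\<psi> = (\<lambda>w::complex list. [w!0, -(w!0 + w!1^a2 + w!2^a3)/w!0^k, w!1, w!2])"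
  have XA: "X \<subseteq> affine_space 4" using KR_sub X_def by simp
  have UA: "U \<subseteq> affine_space 4" using XA U_def by auto
  have U'A: "U' \<subseteq> affine_space 3" using U'_def by auto
  have o1: "zariski_open_in 4 X U" unfolding U_def
    by (rule zo_nonzero[OF _ XA]) (auto intro: pf_intros)
  have o2: "zariski_open_in 3 (affine_space 3) U'" unfolding U'_def
    by (rule zo_nonzero) (auto intro: pf_intros)
  have xU: "x \<in> U" using xX x0 by (simp add: U_def X_def)
  have st1: "gm_stable (KR_action k a2 a3) U"
    unfolding gm_stable_def U_def X_def using act_X[OF k] by (auto simp: act_nth)
  have rep: "rep_act 3 (diag_rep e) l w = [l^(a2*a3) * w!0, l^a3 * w!1, l^a2 * w!2]" for l w
    by (simp add: rep_act_diag3 e_def flip: of_nat_mult)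
  have st2: "gm_stable (rep_act 3 (diag_rep e)) U'"
    unfolding gm_stable_def U'_def by (auto simp: rep affine_space_def)
  have eq: "gm_equivariant (KR_action k a2 a3) (rep_act 3 (diag_rep e)) U \<phi>"
    unfolding gm_equivariant_def by (simp add: rep \<phi>_def act_nth)
  have inU: "\<psi> w \<in> U" if "w \<in> U'" for w
  proof -
    have "w!0 + w!0^k * (-(w!0 + w!1^a2 + w!2^a3)/w!0^k) + w!1^a2 + w!2^a3 = 0"
      using that by (simp add: U'_def field_simps)
    then show ?thesis using that
      by (simp add: U_def U'_def X_def KR_threefold_def affine_space_def \<psi>_def)
  qed
  have inU': "\<phi> v \<in> U'" if "v \<in> U" for v
    using that by (simp add: U_def U'_def \<phi>_def affine_space_def)
  have inv1: "\<psi> (\<phi> v) = v" if "v \<in> U" for v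
  proof -
    have l: "length v = 4" and e: "v!0 + v!0^k * v!1 + v!2^a2 + v!3^a3 = 0" and n: "v!0 \<noteq> 0"
      using that by (auto simp: U_def X_def KR_threefold_def affine_space_def)
    have "-(v!0 + v!2^a2 + v!3^a3)/v!0^k = v!1"
      using e n by (simp add: field_simps) (metis add.commute add.left_commute add_eq_0_iff)
    then show ?thesis using list4[OF l] by (simp add: \<psi>_def \<phi>_def)
  qed
  have inv2: "\<phi> (\<psi> w) = w" if "w \<in> U'" for w
    using that list3[of w] by (simp add: \<psi>_def \<phi>_def U'_def affine_space_def)
  have r1: "regular_map 4 U 3 \<phi>"
    unfolding regular_map_def all_less3
    by (simp add: \<phi>_def) (intro conjI pf_regular[OF _ UA] pf_intros; simp)
  have r2: "regular_map 3 U' 4 \<psi>"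
    unfolding regular_map_def all_less4
  proof (intro conjI)
    show "regular_fun 3 U' (\<lambda>q. \<psi> q ! 1)"
      by (rule regular_fun_global[OF _ _ _ U'A, where f="\<lambda>w. -(w!0 + w!1^a2 + w!2^a3)" and h="\<lambda>w. w!0^k"])
         (auto simp: \<psi>_def U'_def intro!: pf_intros)
  qed (simp add: \<psi>_def; intro conjI pf_regular[OF _ U'A] pf_intros; simp)+
  have iso: "variety_iso 4 U 3 U' \<phi>"
    unfolding variety_iso_def using r1 r2 inU inU' inv1 inv2 by blast
  show ?thesis unfolding gm_linearly_rational_at_def X_def[symmetric]
    using o1 xU st1 diag_rep_linear[of 3 e] o2 st2 iso eq by blast
qed


lemma chart2:
  assumes k: "k = Suc m" and xX: "x \<in> KR_threefold k a2 a3" and x0: "1 + x!0^m * x!1 \<noteq> 0"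
  shows "gm_linearly_rational_at 4 (KR_threefold k a2 a3) (KR_action k a2 a3) x"
proof -
  define X where "X = KR_threefold k a2 a3"
  define U where "U = {v\<in>X. 1 + v!0^m * v!1 \<noteq> 0}"
  define F3 where "F3 = (\<lambda>w::complex list. w!1^a2 + w!2^a3)"
  define up where "up = (\<lambda>w::complex list. 1 + (-1)^m * w!0 * F3 w ^ m)"
  define U' where "U' = {w\<in>affine_space 3. up w \<noteq> 0}"
  define e where "e = (\<lambda>i. [- (int m * int a2 * int a3), int a3, int a2] ! i)"
  define \<phi> where "\<phi> = (\<lambda>v::complex list. [v!1 / (1 + v!0^m * v!1)^m, v!2, v!3])"
  define \<psi> where "\<psi> = (\<lambda>w::complex list. [-(F3 w)/up w, w!0 * up w ^ m, w!1, w!2])"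
  have upP: "(\<lambda>w. up w) \<in> polyfun 3" unfolding up_def F3_def by (intro pf_intros; simp)
  have XA: "X \<subseteq> affine_space 4" using KR_sub X_def by simp
  have UA: "U \<subseteq> affine_space 4" using XA U_def by auto
  have U'A: "U' \<subseteq> affine_space 3" using U'_def by auto
  have o1: "zariski_open_in 4 X U" unfolding U_def
    by (rule zo_nonzero[OF _ XA]) (intro pf_intros; simp)
  have o2: "zariski_open_in 3 (affine_space 3) U'" unfolding U'_def
    by (rule zo_nonzero[OF upP]) simp
  have xU: "x \<in> U" using xX x0 by (simp add: U_def X_def)
  have cl: "(l ^ (a2*a3)) ^ m * l powi (- (int m * int a2 * int a3)) = 1" if "l \<noteq> 0" for l :: complex
    using cL[OF that] .
  have st1: "gm_stable (KR_action k a2 a3) U"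
    unfolding gm_stable_def
  proof (intro allI impI ballI)
    fix l :: complex and v assume l: "l \<noteq> 0" and v: "v \<in> U"
    have "(l^(a2*a3) * v!0)^m * (l powi (- (int m * int a2 * int a3)) * v!1)
        = ((l ^ (a2*a3)) ^ m * l powi (- (int m * int a2 * int a3))) * (v!0^m * v!1)"
      by (simp add: power_mult_distrib)
    also have "\<dots> = v!0^m * v!1" using cl[OF l] by simp
    finally have "1 + (KR_action k a2 a3 l v)!0^m * (KR_action k a2 a3 l v)!1 = 1 + v!0^m * v!1"
      by (simp add: KR_action_def k)
    then show "KR_action k a2 a3 l v \<in> U"
      using v act_X[of k l v a2 a3] l by (simp add: U_def X_def k)
  qed
  have rep: "rep_act 3 (diag_rep e) l w = [l powi (- (int m * int a2 * int a3)) * w!0, l^a3 * w!1, l^a2 * w!2]" for l w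
    by (simp add: rep_act_diag3 e_def)
  have st2: "gm_stable (rep_act 3 (diag_rep e)) U'"
    unfolding gm_stable_def
  proof (intro allI impI ballI)
    fix l :: complex and w assume l: "l \<noteq> 0" and w: "w \<in> U'"
    have z: "(l^a3 * s)^a2 = l^(a2*a3) * s^a2" for s by (simp add: power_mult_distrib power_mult[symmetric] mult.commute)
    have t: "(l^a2 * s)^a3 = l^(a2*a3) * s^a3" for s by (simp add: power_mult_distrib power_mult[symmetric])
    have F: "F3 (rep_act 3 (diag_rep e) l w) = l^(a2*a3) * F3 w"
      by (simp add: F3_def rep power_mult_distrib algebra_simps flip: power_mult)
    have "up (rep_act 3 (diag_rep e) l w) = 1 + (-1)^m * w!0 * F3 w ^ m *
          ((l ^ (a2*a3)) ^ m * l powi (- (int m * int a2 * int a3)))"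
      unfolding up_def F by (simp add: rep power_mult_distrib algebra_simps)
    also have "\<dots> = up w" using cl[OF l] by (simp add: up_def)
    finally show "rep_act 3 (diag_rep e) l w \<in> U'" using w by (simp add: U'_def rep affine_space_def)
  qed
  have eq: "gm_equivariant (KR_action k a2 a3) (rep_act 3 (diag_rep e)) U \<phi>"
    unfolding gm_equivariant_def
  proof (intro allI impI ballI)
    fix l :: complex and v assume l: "l \<noteq> 0" and v: "v \<in> U"
    have "(l^(a2*a3) * v!0)^m * (l powi (- (int m * int a2 * int a3)) * v!1)
        = ((l ^ (a2*a3)) ^ m * l powi (- (int m * int a2 * int a3))) * (v!0^m * v!1)"
      by (simp add: power_mult_distrib)
    also have "\<dots> = v!0^m * v!1" using cl[OF l] by simp
    finally have u: "(l^(a2*a3) * v!0)^m * (l powi (- (int m * int a2 * int a3)) * v!1) = v!0^m * v!1" .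
    have A: "\<phi> (KR_action k a2 a3 l v) = [l powi (- (int m * int a2 * int a3)) * v!1 /
       (1 + (l^(a2*a3) * v!0)^m * (l powi (- (int m * int a2 * int a3)) * v!1))^m, l^a3*v!2, l^a2*v!3]"
      by (simp add: KR_action_def k \<phi>_def)
    show "\<phi> (KR_action k a2 a3 l v) = rep_act 3 (diag_rep e) l (\<phi> v)"
      unfolding A u by (simp add: \<phi>_def rep)
  qed
  have key: "(-1)^m * (-1)^m = (1::complex)" by (simp flip: power_mult_distrib)
  have upphi: "up (\<phi> v) = 1 + v!0^m * v!1" and xe: "v!0 * (1 + v!0^m * v!1) = - (v!2^a2 + v!3^a3)"
    if "v \<in> U" for v
  proof -
    have e: "v!0 + v!0^k * v!1 + v!2^a2 + v!3^a3 = 0" and n: "1 + v!0^m * v!1 \<noteq> 0"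
      using that by (auto simp: U_def X_def KR_threefold_def)
    define u where "u = 1 + v!0^m * v!1"
    show xe': "v!0 * (1 + v!0^m * v!1) = - (v!2^a2 + v!3^a3)"
      using e by (simp add: k algebra_simps) (metis add.commute add.left_commute add_eq_0_iff)
    have F: "F3 (\<phi> v) = (-1) * v!0 * u" using xe' by (simp add: F3_def \<phi>_def u_def)
    have "F3 (\<phi> v) ^ m = (-1)^m * v!0^m * u^m" unfolding F by (simp only: power_mult_distrib)
    moreover have "up (\<phi> v) = 1 + (-1)^m * (v!1 / u^m) * F3 (\<phi> v)^m"
      unfolding up_def by (simp add: \<phi>_def u_def)
    ultimately have "up (\<phi> v) = 1 + ((-1)^m * (-1)^m) * (v!1 / u^m * u^m) * v!0^m"
      by (simp only: mult_ac)
    also have "\<dots> = u" using n key by (simp add: u_def)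
    finally show "up (\<phi> v) = 1 + v!0^m * v!1" by (simp add: u_def)
  qed
  have inU': "\<phi> v \<in> U'" if "v \<in> U" for v
    using that upphi[OF that] by (simp add: U_def U'_def \<phi>_def affine_space_def)
  have inv1: "\<psi> (\<phi> v) = v" if "v \<in> U" for v
  proof -
    have l: "length v = 4" and n: "1 + v!0^m * v!1 \<noteq> 0"
      using that by (auto simp: U_def X_def KR_threefold_def affine_space_def)
    have F: "F3 (\<phi> v) = v!2^a2 + v!3^a3" by (simp add: F3_def \<phi>_def)
    have a: "-(F3 (\<phi> v)) / up (\<phi> v) = v!0" using xe[OF that] n
      by (simp add: upphi[OF that] F field_simps)
    have b: "(\<phi> v)!0 * up (\<phi> v) ^ m = v!1" using n
      unfolding upphi[OF that] by (simp add: \<phi>_def)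
    show ?thesis using list4[OF l] a b by (simp add: \<psi>_def \<phi>_def)
  qed
  have upsi: "1 + (\<psi> w)!0^m * (\<psi> w)!1 = up w" if "w \<in> U'" for w
  proof -
    have n: "up w \<noteq> 0" using that by (simp add: U'_def)
    have "(\<psi> w)!0^m * (\<psi> w)!1 = ((-1)^m * F3 w^m / up w ^ m) * (w!0 * up w ^ m)"
      by (simp add: \<psi>_def power_divide power_minus')
    also have "\<dots> = (-1)^m * w!0 * F3 w ^ m" using n by simp
    finally show ?thesis by (simp add: up_def)
  qed
  have inU: "\<psi> w \<in> U" if "w \<in> U'" for w
  proof -
    have n: "up w \<noteq> 0" using that by (simp add: U'_def)
    have "(\<psi> w)!0 + (\<psi> w)!0^k * (\<psi> w)!1 + (\<psi> w)!2^a2 + (\<psi> w)!3^a3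
        = (\<psi> w)!0 * (1 + (\<psi> w)!0^m * (\<psi> w)!1) + F3 w"
      by (simp add: k \<psi>_def F3_def algebra_simps)
    also have "\<dots> = 0" using upsi[OF that] n by (simp add: \<psi>_def)
    finally show ?thesis using upsi[OF that] n
      by (simp add: U_def X_def KR_threefold_def affine_space_def \<psi>_def)
  qed
  have inv2: "\<phi> (\<psi> w) = w" if "w \<in> U'" for w
  proof -
    have n: "up w \<noteq> 0" and l: "length w = 3" using that by (auto simp: U'_def affine_space_def)
    have "(\<phi> (\<psi> w)) = [(\<psi> w)!1 / (up w)^m, w!1, w!2]"
      using upsi[OF that] by (simp add: \<phi>_def \<psi>_def)
    also have "\<dots> = w" using n list3[OF l] by (simp add: \<psi>_def)
    finally show ?thesis .
  qed
  have r1: "regular_map 4 U 3 \<phi>"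
    unfolding regular_map_def all_less3
  proof (intro conjI)
    show "regular_fun 4 U (\<lambda>q. \<phi> q ! 0)"
      by (rule regular_fun_global[OF _ _ _ UA, where f="\<lambda>v. v!1" and h="\<lambda>v. (1 + v!0^m * v!1)^m"])
         (auto simp: \<phi>_def U_def intro!: pf_intros)
  qed (simp add: \<phi>_def; intro conjI pf_regular[OF _ UA] pf_intros; simp)+
  have r2: "regular_map 3 U' 4 \<psi>"
    unfolding regular_map_def all_less4
  proof (intro conjI)
    show "regular_fun 3 U' (\<lambda>q. \<psi> q ! 0)"
      by (rule regular_fun_global[OF _ upP _ U'A, where f="\<lambda>w. -(F3 w)"])
         (auto simp: \<psi>_def U'_def F3_def intro!: pf_intros)
    show "regular_fun 3 U' (\<lambda>q. \<psi> q ! 1)"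
      by (rule pf_regular[OF _ U'A]) (simp add: \<psi>_def; intro pf_intros upP; simp)
  qed (simp add: \<psi>_def; intro conjI pf_regular[OF _ U'A] pf_intros; simp)+
  have iso: "variety_iso 4 U 3 U' \<phi>"
    unfolding variety_iso_def using r1 r2 inU inU' inv1 inv2 by blast
  show ?thesis unfolding gm_linearly_rational_at_def X_def[symmetric]
    using o1 xU st1 diag_rep_linear[of 3 e] o2 st2 iso eq by blast
qed


theorem theorem3p6:
  fixes k a2 a3 :: nat
  assumes "k \<ge> 2" and "a2 > 0" and "a3 > 0" and "coprime a2 a3"
  shows "gm_linearly_uniformly_rational 4 (KR_threefold k a2 a3) (KR_action k a2 a3)"
  unfolding gm_linearly_uniformly_rational_def
proof
  fix x assume xX: "x \<in> KR_threefold k a2 a3"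
  obtain m where k: "k = Suc m" and m: "m \<ge> 1" using assms(1) by (cases k) auto
  show "gm_linearly_rational_at 4 (KR_threefold k a2 a3) (KR_action k a2 a3) x"
  proof (cases "x!0 = 0")
    case True
    then have "1 + x!0^m * x!1 \<noteq> 0" using m by (simp add: power_0_left)
    then show ?thesis using chart2[OF k xX] by simp
  next
    case False
    then show ?thesis using chart1[OF _ xX] k by simp
  qed
qed

end
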